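(* Let $\mathbb X,\mathbb Y$ be finite-dimensional real Hilbert spaces, $\alpha\in(0,1]$, $\mathfrak D\subseteq\mathbb X$ a nonempty $C^{1,\alpha}$-cone reducible closed convex set, $\mathcal T:\mathbb X\to\mathbb Y$ a linear mapping, $l:\mathbb Y\to\mathbb{R}$ a function that is strongly convex on every compact convex set and has locally Lipschitz gradient, and $v\in\mathbb X$. Let $h(x):=l(\mathcal Tx)+\langle v,x\rangle+\sigma_{\mathfrak D}(x)$. Then for any $\bar x\in\operatorname{Argmin}h$ it holds that $\bar x\in\mathcal N_{\mathfrak D}(\bar w)$ with $\bar w:=-\mathcal T^*\nabla l(\mathcal T\bar x)-v$, and there exist positive constants $\rho,\delta,\kappa$ such that $$\mathcal N_{\mathfrak D}(w)\cap B(\bar x,\delta)\subseteq\mathcal N_{\mathfrak D}(\bar w)+\kappa\|w-\bar w\|^\alpha B(0,1)\quad\text{for all }w\in B(\bar w,\rho).$$ Furthermore, if the pair $\{\mathcal T^{-1}\{\mathcal T\bar x\},\ \mathcal N_{\mathfrak D}(-\mathcal T^*\nabla l(\mathcal T\bar x)-v)\}$ is boundedly linearly regular at $\bar x$, then $h$ satisfies the KL property at $\bar x$ with exponent $\frac1{\alpha+1}$.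
   Context: $\sigma_{\mathfrak D}(x):=\sup_{u\in\mathfrak D}\langle x,u\rangle$; $\mathcal T^*$ is the adjoint of $\mathcal T$; $B(x,\eta)$ is the closed ball of radius $\eta$ about $x$; $\mathcal N_{\mathfrak D}(w):=\{z:\langle z,u-w\rangle\le0\ \forall u\in\mathfrak D\}$ for $w\in\mathfrak D$ (empty otherwise). $C^{1,\alpha}$-cone reducibility: a closed set $\mathfrak D\subseteq\mathbb X$ is $C^{1,\alpha}$-cone reducible at $\hat x\in\mathfrak D$ if there are $\rho>0$, a closed convex pointed cone $K$ in a finite-dimensional Hilbert space $\mathbb Z$ and a mapping $\Xi:\mathbb X\to\mathbb Z$ with $\Xi(\hat x)=0$, continuously differentiable on $B(\hat x,\rho)$, with $D\Xi(\hat x)$ surjective, $x\mapsto D\Xi(x)$ $\alpha$-Hölder continuous on $B(\hat x,\rho)$, and $\mathfrak D\cap B(\hat x,\rho)=\{x:\Xi(x)\in K\}\cap B(\hat x,\rho)$; $\mathfrak D$ is $C^{1,\alpha}$-cone reducible if this holds at every point of $\mathfrak D$. Bounded linear regularity: closed convex sets $\mathfrak D_1,\mathfrak D_2$ are boundedly linearly regular at $\hat x\in\mathfrak D_1\cap\mathfrak D_2$ if for every bounded neighborhood $\mathfrak U$ of $\hat x$ there is $c>0$ with $\operatorname{dist}(x,\mathfrak D_1\cap\mathfrak D_2)\le c(\operatorname{dist}(x,\mathfrak D_1)+\operatorname{dist}(x,\mathfrak D_2))$ for all $x\in\mathfrak U$. KL property with exponent $\theta\in[0,1)$: a proper closed convex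 $h$ satisfies it at $\hat x\in\operatorname{dom}\partial h$ if there exist $c\in(0,\infty]$, a neighborhood $U$ of $\hat x$ and $a_0>0$ such that, with $\varphi(s)=a_0s^{1-\theta}$, $\varphi'(h(x)-h(\hat x))\operatorname{dist}(0,\partial h(x))\ge1$ whenever $x\in U$ and $h(\hat x)<h(x)<h(\hat x)+c$. *)

theory Defs
  imports "HOL-Analysis.Analysis"
begin

definition support_fun :: "'a::real_inner set \<Rightarrow> 'a \<Rightarrow> ereal" where
  "support_fun D x = (SUP u\<in>D. ereal (inner x u))"

definition normal_cone :: "'a::real_inner set \<Rightarrow> 'a \<Rightarrow> 'a set" where
  "normal_cone D w = (if w \<in> D then {z. \<forall>u\<in>D. inner z (u - w) \<le> 0} else {})"

definition argmin_set :: "('a \<Rightarrow> ereal) \<Rightarrow> 'a set" where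
  "argmin_set h = {x. \<forall>y. h x \<le> h y}"

definition subdiff :: "('a::real_inner \<Rightarrow> ereal) \<Rightarrow> 'a \<Rightarrow> 'a set" where
  "subdiff h x = (if \<bar>h x\<bar> \<noteq> \<infinity>
     then {g. \<forall>y. h y \<ge> h x + ereal (inner g (y - x))} else {})"

text \<open>The finite-dimensional Hilbert space Z is
  realised as a linear subspace S of X (possible since D Xi(x0) is surjective onto Z, so
  dim Z \<le> dim X, and finite-dimensional Hilbert spaces are isometric iff same dimension).\<close>
definition cone_reducible_at :: "real \<Rightarrow> 'a::euclidean_space set \<Rightarrow> 'a \<Rightarrow> bool" where
  "cone_reducible_at \<alpha> D x0 \<longleftrightarrow>
    (\<exists>\<rho> > 0. \<exists>(S::'a set) K Xi DXi L.
       subspace S \<and> K \<subseteq> S \<and> closed K \<and> convex K \<and> cone K \<and> K \<inter> uminus ` K = {0} \<and>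
       (\<forall>x. Xi x \<in> S) \<and> Xi x0 = 0 \<and>
       (\<forall>x\<in>cball x0 \<rho>. linear (DXi x) \<and> (Xi has_derivative DXi x) (at x)) \<and>
       range (DXi x0) = S \<and>
       (\<forall>x\<in>cball x0 \<rho>. \<forall>y\<in>cball x0 \<rho>.
          onorm (\<lambda>u. DXi x u - DXi y u) \<le> L * (norm (x - y)) powr \<alpha>) \<and>
       D \<inter> cball x0 \<rho> = {x. Xi x \<in> K} \<inter> cball x0 \<rho>)"

definition cone_reducible :: "real \<Rightarrow> 'a::euclidean_space set \<Rightarrow> bool" where
  "cone_reducible \<alpha> D \<longleftrightarrow> (\<forall>x\<in>D. cone_reducible_at \<alpha> D x)"

definition strongly_convex_on :: "'a::real_normed_vector set \<Rightarrow> ('a \<Rightarrow> real) \<Rightarrow> bool" where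
  "strongly_convex_on C f \<longleftrightarrow> (\<exists>\<mu>>0. \<forall>x\<in>C. \<forall>y\<in>C. \<forall>t::real. 0 \<le> t \<and> t \<le> 1 \<longrightarrow>
     f ((1 - t) *\<^sub>R x + t *\<^sub>R y) \<le> (1 - t) * f x + t * f y - \<mu> / 2 * t * (1 - t) * (norm (x - y))\<^sup>2)"

definition locally_lipschitz :: "('a::metric_space \<Rightarrow> 'b::metric_space) \<Rightarrow> bool" where
  "locally_lipschitz g \<longleftrightarrow> (\<forall>y. \<exists>e>0. \<exists>L. \<forall>a\<in>ball y e. \<forall>b\<in>ball y e. dist (g a) (g b) \<le> L * dist a b)"

definition bdd_lin_regular :: "'a::real_normed_vector set \<Rightarrow> 'a set \<Rightarrow> 'a \<Rightarrow> bool" where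
  "bdd_lin_regular D1 D2 x0 \<longleftrightarrow> x0 \<in> D1 \<inter> D2 \<and>
     (\<forall>U. bounded U \<and> x0 \<in> interior U \<longrightarrow>
        (\<exists>c>0. \<forall>x\<in>U. infdist x (D1 \<inter> D2) \<le> c * (infdist x D1 + infdist x D2)))"

text \<open>KL property with exponent theta, phi(s) = a0 s^(1-theta), so
  phi'(s) = a0 (1-theta) s^(-theta); dist(0, {}) = +infinity is handled by the disjunct.\<close>
definition KL_exponent :: "('a::real_inner \<Rightarrow> ereal) \<Rightarrow> 'a \<Rightarrow> real \<Rightarrow> bool" where
  "KL_exponent h x0 \<theta> \<longleftrightarrow> subdiff h x0 \<noteq> {} \<and>
    (\<exists>c::ereal. c > 0 \<and> (\<exists>U. open U \<and> x0 \<in> U \<and> (\<exists>a0>0.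
      \<forall>x\<in>U. h x0 < h x \<and> h x < h x0 + c \<longrightarrow>
        subdiff h x = {} \<or>
        a0 * (1 - \<theta>) * (real_of_ereal (h x - h x0)) powr (- \<theta>) * infdist 0 (subdiff h x) \<ge> 1)))"

end

theory Submission
  imports Defs "HOL-Analysis.Analysis"
begin
lemma nc_mem: "w \<in> D \<Longrightarrow> z \<in> normal_cone D w \<longleftrightarrow> (\<forall>u\<in>D. inner z (u - w) \<le> 0)"
  by (simp add: normal_cone_def)

lemma nc_in: "z \<in> normal_cone D w \<Longrightarrow> w \<in> D"
  by (simp add: normal_cone_def split: if_splits)

lemma nc_closed: "closed (normal_cone D w)"
proof (cases "w \<in> D")
  case True
  have "normal_cone D w = (\<Inter>u\<in>D. {z. inner z (u - w) \<le> 0})"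
    using True by (auto simp: normal_cone_def)
  moreover have "closed (\<Inter>u\<in>D. {z. inner z (u - w) \<le> 0})"
  proof (intro closed_INT ballI)
    fix u show "closed {z. inner z (u - w) \<le> 0}"
      using closed_halfspace_le[of "u - w" 0] by (simp add: inner_commute)
  qed
  ultimately show ?thesis by simp
next
  case False thus ?thesis by (simp add: normal_cone_def)
qed

lemma nc_convex: "convex (normal_cone D w)"
proof (cases "w \<in> D")
  case True
  show ?thesis unfolding convex_def
  proof (intro allI impI ballI)
    fix x y :: 'a and u v :: real
    assume x: "x \<in> normal_cone D w" and y: "y \<in> normal_cone D w" and uv: "0 \<le> u" "0 \<le> v" "u + v = 1"
    show "u *\<^sub>R x + v *\<^sub>R y \<in> normal_cone D w"
      unfolding nc_mem[OF True]
    proof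
    fix p assume p: "p \<in> D"
    have "inner x (p - w) \<le> 0" "inner y (p - w) \<le> 0" using x y p True by (auto simp: nc_mem)
    hence "u * inner x (p - w) + v * inner y (p - w) \<le> 0"
      using uv by (simp add: add_nonpos_nonpos mult_nonneg_nonpos)
    thus "inner (u *\<^sub>R x + v *\<^sub>R y) (p - w) \<le> 0" by (simp add: inner_add_left)
  qed
  qed
next
  case False thus ?thesis by (simp add: normal_cone_def)
qed

lemma nc_scale: "z \<in> normal_cone D w \<Longrightarrow> 0 \<le> c \<Longrightarrow> c *\<^sub>R z \<in> normal_cone D w"
  unfolding normal_cone_def
  by (auto split: if_splits intro!: mult_nonneg_nonpos)

lemma nc_zero: "w \<in> D \<Longrightarrow> 0 \<in> normal_cone D w"
  by (simp add: normal_cone_def)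

lemma sf_ge: "u \<in> D \<Longrightarrow> ereal (inner x u) \<le> support_fun D x"
  unfolding support_fun_def by (rule SUP_upper2) auto

lemma sf_le: "(\<And>u. u \<in> D \<Longrightarrow> inner x u \<le> b) \<Longrightarrow> support_fun D x \<le> ereal b"
  unfolding support_fun_def by (rule SUP_least) auto

lemma sf_nc: "z \<in> normal_cone D w \<Longrightarrow> support_fun D z = ereal (inner z w)"
proof -
  assume z: "z \<in> normal_cone D w"
  hence w: "w \<in> D" by (rule nc_in)
  have "\<And>u. u \<in> D \<Longrightarrow> inner z u \<le> inner z w" using z w
    by (auto simp: nc_mem inner_diff_right)
  hence "support_fun D z \<le> ereal (inner z w)" by (rule sf_le)
  moreover have "ereal (inner z w) \<le> support_fun D z" using w by (rule sf_ge)
  ultimately show ?thesis by simp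
qed

lemma sf_notinf: "D \<noteq> {} \<Longrightarrow> support_fun D x \<noteq> -\<infinity>"
proof -
  assume "D \<noteq> {}" then obtain u where "u \<in> D" by auto
  hence "ereal (inner x u) \<le> support_fun D x" by (rule sf_ge)
  thus ?thesis by auto
qed

lemma sf_add: "D \<noteq> {} \<Longrightarrow> support_fun D (a + b) \<le> support_fun D a + support_fun D b"
proof -
  assume D: "D \<noteq> {}"
  show ?thesis unfolding support_fun_def[of D "a+b"]
  proof (rule SUP_least)
    fix u assume u: "u \<in> D"
    have "ereal (inner (a + b) u) = ereal (inner a u) + ereal (inner b u)"
      by (simp add: inner_add_left)
    also have "\<dots> \<le> support_fun D a + support_fun D b"
      by (intro add_mono sf_ge u)
    finally show "ereal (inner (a + b) u) \<le> support_fun D a + support_fun D b" .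
  qed
qed

lemma sf_scale_le: "0 \<le> t \<Longrightarrow> support_fun D (t *\<^sub>R x) \<le> ereal t * support_fun D x"
proof -
  assume t: "0 \<le> t"
  show ?thesis unfolding support_fun_def[of D "t *\<^sub>R x"]
  proof (rule SUP_least)
    fix u assume u: "u \<in> D"
    have "ereal (inner (t *\<^sub>R x) u) = ereal t * ereal (inner x u)" by simp
    also have "\<dots> \<le> ereal t * support_fun D x"
      by (intro ereal_mult_left_mono sf_ge u) (use t in auto)
    finally show "ereal (inner (t *\<^sub>R x) u) \<le> ereal t * support_fun D x" .
  qed
qed

lemma sf_zero: "D \<noteq> {} \<Longrightarrow> support_fun D 0 = 0"
  unfolding support_fun_def by (simp add: zero_ereal_def)

lemma sep_point:
  fixes D :: "'a::euclidean_space set"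
  assumes "closed D" "convex D" "p \<notin> D"
  shows "\<exists>a. support_fun D a < ereal (inner a p)"
proof -
  obtain a b where ab: "inner a p < b" "\<forall>x\<in>D. inner a x > b"
    using separating_hyperplane_closed_point[OF assms(2,1,3)] by blast
  have "support_fun D (-a) \<le> ereal (-b)"
    by (rule sf_le) (use ab in force)
  also have "\<dots> < ereal (inner (-a) p)" using ab by simp
  finally show ?thesis by blast
qed

lemma cone_sep:
  fixes K :: "'a::euclidean_space set"
  assumes "closed K" "convex K" "cone K" "0 \<in> K" "p \<notin> K"
  shows "\<exists>\<mu>. (\<forall>k\<in>K. inner \<mu> k \<le> 0) \<and> inner \<mu> p > 0"
proof -
  obtain a b where ab: "inner a p < b" "\<forall>x\<in>K. inner a x > b"
    using separating_hyperplane_closed_point[OF assms(2,1,5)] by blast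
  have b: "b < 0" using ab(2) assms(4) by force
  have "inner a k \<ge> 0" if k: "k \<in> K" for k
  proof (rule ccontr)
    assume "\<not> inner a k \<ge> 0"
    hence neg: "inner a k < 0" by simp
    define t where "t = b / inner a k"
    have t: "t \<ge> 0" using b neg by (simp add: t_def divide_nonpos_neg)
    have "t *\<^sub>R k \<in> K" using assms(3) k t by (rule mem_cone)
    hence "inner a (t *\<^sub>R k) > b" using ab by blast
    moreover have "inner a (t *\<^sub>R k) = b" using neg by (simp add: t_def)
    ultimately show False by simp
  qed
  hence "\<forall>k\<in>K. inner (-a) k \<le> 0" by simp
  moreover have "inner (-a) p > 0" using ab b by simp
  ultimately show ?thesis by blast
qed

lemma DQ_lower:
  fixes f :: "'a::real_normed_vector \<Rightarrow> real"
  assumes df: "(f has_derivative fd) (at x)" and lin: "linear fd"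
    and low: "\<And>t. 0 < t \<Longrightarrow> t \<le> 1 \<Longrightarrow> c * t \<le> f (x + t *\<^sub>R d) - f x"
  shows "c \<le> fd d"
proof -
  have d1: "((\<lambda>t::real. x + t *\<^sub>R d) has_derivative (\<lambda>t. t *\<^sub>R d)) (at 0)"
    by (auto intro!: derivative_eq_intros)
  have d2: "((\<lambda>t. f (x + t *\<^sub>R d)) has_derivative (\<lambda>t. fd (t *\<^sub>R d))) (at 0)"
    using has_derivative_compose[OF d1, of f fd] df by simp
  have eq: "(\<lambda>t. fd (t *\<^sub>R d)) = (*) (fd d)"
    using lin by (auto simp: linear_scale fun_eq_iff)
  have "((\<lambda>t. f (x + t *\<^sub>R d)) has_field_derivative fd d) (at 0)"
    using d2 unfolding has_field_derivative_def eq .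
  hence lim: "((\<lambda>h. (f (x + (0 + h) *\<^sub>R d) - f (x + 0 *\<^sub>R d)) / h) \<longlongrightarrow> fd d) (at 0)"
    unfolding DERIV_def .
  hence lim1: "((\<lambda>h. (f (x + h *\<^sub>R d) - f x) / h) \<longlongrightarrow> fd d) (at 0)"
    by simp
  have lim2: "((\<lambda>h. (f (x + h *\<^sub>R d) - f x) / h) \<longlongrightarrow> fd d) (at_right 0)"
    using lim1 unfolding filterlim_at_split by blast
  have ev: "eventually (\<lambda>h. c \<le> (f (x + h *\<^sub>R d) - f x) / h) (at_right (0::real))"
    unfolding eventually_at_right_field
    by (rule exI[of _ 1]) (auto simp: pos_le_divide_eq low)
  show ?thesis
    by (rule tendsto_le[OF trivial_limit_at_right_real lim2 tendsto_const ev])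
qed

lemma subdiff_sum:
  fixes D :: "'a::euclidean_space set" and f :: "'a \<Rightarrow> real"
  assumes D: "D \<noteq> {}" "closed D" "convex D"
   and df: "(f has_derivative (\<lambda>u. inner gf u)) (at x)"
   and h: "\<And>y. h y = ereal (f y) + support_fun D y"
   and g: "g \<in> subdiff h x"
  shows "g - gf \<in> D \<and> x \<in> normal_cone D (g - gf)"
proof -
  have fin: "\<bar>h x\<bar> \<noteq> \<infinity>" and sub: "\<And>y. h y \<ge> h x + ereal (inner g (y - x))"
    using g by (auto simp: subdiff_def split: if_splits)
  have lin: "linear (\<lambda>u. inner gf u)" by (simp add: linear_iff inner_add_right)
  have "support_fun D x \<noteq> -\<infinity>" using D(1) by (rule sf_notinf)
  moreover have "support_fun D x \<noteq> \<infinity>" using fin h[of x] by auto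
  ultimately obtain sx where sx: "support_fun D x = ereal sx" by (cases "support_fun D x") auto
  have hx: "h x = ereal (f x + sx)" using h[of x] sx by simp
  have a: "ereal (inner (g - gf) d) \<le> support_fun D d" for d
  proof (cases "support_fun D d = \<infinity>")
    case True thus ?thesis by simp
  next
    case False
    with sf_notinf[OF D(1), of d] obtain s where s: "support_fun D d = ereal s"
      by (cases "support_fun D d") auto
    have "(inner g d - s) * t \<le> f (x + t *\<^sub>R d) - f x" if t: "0 < t" "t \<le> 1" for t
    proof -
      have "support_fun D (x + t *\<^sub>R d) \<le> support_fun D x + support_fun D (t *\<^sub>R d)"
        using D(1) by (rule sf_add)
      also have "\<dots> \<le> ereal sx + ereal t * ereal s"
      proof -
        have "support_fun D (t *\<^sub>R d) \<le> ereal t * ereal s" using sf_scale_le[of t D d] t s by simp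
        thus ?thesis using sx by (metis add_left_mono)
      qed
      finally have s1: "support_fun D (x + t *\<^sub>R d) \<le> ereal (sx + t * s)" by simp
      have "ereal (f x + sx + t * inner g d) = h x + ereal (inner g ((x + t *\<^sub>R d) - x))"
        using hx by simp
      also have "\<dots> \<le> h (x + t *\<^sub>R d)" by (rule sub)
      also have "\<dots> \<le> ereal (f (x + t *\<^sub>R d)) + ereal (sx + t * s)"
        unfolding h by (rule add_left_mono[OF s1])
      finally have "f x + sx + t * inner g d \<le> f (x + t *\<^sub>R d) + (sx + t * s)" by simp
      thus ?thesis by (simp add: algebra_simps)
    qed
    hence "inner g d - s \<le> inner gf d" by (intro DQ_lower[OF df lin]) auto
    thus ?thesis using s by (simp add: inner_diff_left)
  qed
  have inD: "g - gf \<in> D"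
  proof (rule ccontr)
    assume "g - gf \<notin> D"
    then obtain a where "support_fun D a < ereal (inner a (g - gf))"
      using sep_point[OF D(2,3)] by blast
    with a[of a] show False by (simp add: inner_commute)
  qed
  have "sx - inner g x \<le> inner gf (-x)"
  proof (rule DQ_lower[OF df lin])
    fix t :: real assume t: "0 < t" "t \<le> 1"
    have "x + t *\<^sub>R (-x) = (1 - t) *\<^sub>R x" by (simp add: algebra_simps)
    hence "support_fun D (x + t *\<^sub>R (-x)) \<le> ereal (1 - t) * ereal sx"
      using sf_scale_le[of "1 - t" D x] t sx by simp
    hence s1: "support_fun D (x + t *\<^sub>R (-x)) \<le> ereal ((1 - t) * sx)" by simp
    have "ereal (f x + sx - t * inner g x) = h x + ereal (inner g ((x + t *\<^sub>R (-x)) - x))"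
      using hx by simp
    also have "\<dots> \<le> h (x + t *\<^sub>R (-x))" by (rule sub)
    also have "\<dots> \<le> ereal (f (x + t *\<^sub>R (-x))) + ereal ((1 - t) * sx)"
      unfolding h by (rule add_left_mono[OF s1])
    finally have "f x + sx - t * inner g x \<le> f (x + t *\<^sub>R (-x)) + (1 - t) * sx" by simp
    thus "(sx - inner g x) * t \<le> f (x + t *\<^sub>R (-x)) - f x" by (simp add: algebra_simps)
  qed
  hence sxle: "sx \<le> inner (g - gf) x" by (simp add: inner_diff_left)
  have "inner x (u - (g - gf)) \<le> 0" if u: "u \<in> D" for u
  proof -
    have "ereal (inner x u) \<le> ereal sx" using sf_ge[OF u, of x] sx by simp
    thus ?thesis using sxle by (simp add: inner_diff_right inner_commute)
  qed
  thus ?thesis using inD by (simp add: nc_mem)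
qed

lemma DQ_lower2:
  fixes f :: "'a::real_normed_vector \<Rightarrow> real"
  assumes df: "(f has_derivative fd) (at x)" and lin: "linear fd"
    and low: "\<And>t. 0 < t \<Longrightarrow> t \<le> 1 \<Longrightarrow> c * t - K * t\<^sup>2 \<le> f (x + t *\<^sub>R d) - f x"
  shows "c \<le> fd d"
proof -
  have d1: "((\<lambda>t::real. x + t *\<^sub>R d) has_derivative (\<lambda>t. t *\<^sub>R d)) (at 0)"
    by (auto intro!: derivative_eq_intros)
  have d2: "((\<lambda>t. f (x + t *\<^sub>R d)) has_derivative (\<lambda>t. fd (t *\<^sub>R d))) (at 0)"
    using has_derivative_compose[OF d1, of f fd] df by simp
  have eq: "(\<lambda>t. fd (t *\<^sub>R d)) = (*) (fd d)"
    using lin by (auto simp: linear_scale fun_eq_iff)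
  have "((\<lambda>t. f (x + t *\<^sub>R d)) has_field_derivative fd d) (at 0)"
    using d2 unfolding has_field_derivative_def eq .
  hence lim: "((\<lambda>h. (f (x + (0 + h) *\<^sub>R d) - f (x + 0 *\<^sub>R d)) / h) \<longlongrightarrow> fd d) (at 0)"
    unfolding DERIV_def .
  hence lim1: "((\<lambda>h. (f (x + h *\<^sub>R d) - f x) / h) \<longlongrightarrow> fd d) (at 0)"
    by simp
  have lim2: "((\<lambda>h. (f (x + h *\<^sub>R d) - f x) / h) \<longlongrightarrow> fd d) (at_right 0)"
    using lim1 unfolding filterlim_at_split by blast
  have lim3: "((\<lambda>h::real. c - K * h) \<longlongrightarrow> c - K * 0) (at_right 0)"
    by (intro tendsto_intros)
  have ev: "eventually (\<lambda>h. c - K * h \<le> (f (x + h *\<^sub>R d) - f x) / h) (at_right (0::real))"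
    unfolding eventually_at_right_field
  proof (rule exI[of _ 1], intro conjI allI impI)
    fix h :: real assume h: "0 < h" "h < 1"
    have "(c - K * h) * h = c * h - K * h\<^sup>2" by (simp add: algebra_simps power2_eq_square)
    also have "\<dots> \<le> f (x + h *\<^sub>R d) - f x" using low h by simp
    finally show "c - K * h \<le> (f (x + h *\<^sub>R d) - f x) / h" using h by (simp add: pos_le_divide_eq)
  qed simp
  show ?thesis
    using tendsto_le[OF trivial_limit_at_right_real lim2 lim3 ev] by simp
qed

lemma strong_mono:
  fixes l :: "'b::euclidean_space \<Rightarrow> real"
  assumes sc: "strongly_convex_on C l"
    and dl: "\<And>y. (l has_derivative (\<lambda>u. inner (gl y) u)) (at y)"
  shows "\<exists>\<mu>>0. \<forall>a\<in>C. \<forall>b\<in>C. \<mu> * (norm (a - b))\<^sup>2 \<le> inner (gl a - gl b) (a - b)"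
proof -
  obtain \<mu> where mu: "\<mu> > 0" and ineq: "\<And>x y t. x \<in> C \<Longrightarrow> y \<in> C \<Longrightarrow> 0 \<le> t \<Longrightarrow> t \<le> 1 \<Longrightarrow>
     l ((1 - t) *\<^sub>R x + t *\<^sub>R y) \<le> (1 - t) * l x + t * l y - \<mu> / 2 * t * (1 - t) * (norm (x - y))\<^sup>2"
    using sc unfolding strongly_convex_on_def by blast
  have one: "inner (gl a) (b - a) \<le> l b - l a - \<mu> / 2 * (norm (a - b))\<^sup>2" if a: "a \<in> C" and b: "b \<in> C" for a b
  proof -
    have dm: "((\<lambda>y. - l y) has_derivative (\<lambda>u. - inner (gl a) u)) (at a)"
      using dl[of a] by (intro derivative_intros)
    have lin: "linear (\<lambda>u. - inner (gl a) u)" by (simp add: linear_iff inner_add_right)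
    have "-(l b - l a - \<mu> / 2 * (norm (a - b))\<^sup>2) \<le> - inner (gl a) (b - a)"
    proof (rule DQ_lower2[OF dm lin, where K = "\<mu> / 2 * (norm (a - b))\<^sup>2"])
      fix t :: real assume t: "0 < t" "t \<le> 1"
      have "a + t *\<^sub>R (b - a) = (1 - t) *\<^sub>R a + t *\<^sub>R b" by (simp add: algebra_simps)
      hence "l (a + t *\<^sub>R (b - a)) \<le> (1 - t) * l a + t * l b - \<mu> / 2 * t * (1 - t) * (norm (a - b))\<^sup>2"
        using ineq[OF a b, of t] t by simp
      thus "- (l b - l a - \<mu> / 2 * (norm (a - b))\<^sup>2) * t - \<mu> / 2 * (norm (a - b))\<^sup>2 * t\<^sup>2
            \<le> - l (a + t *\<^sub>R (b - a)) - - l a"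
        by (simp add: algebra_simps power2_eq_square add_divide_distrib diff_divide_distrib)
    qed
    thus ?thesis by simp
  qed
  have "\<mu> * (norm (a - b))\<^sup>2 \<le> inner (gl a - gl b) (a - b)" if a: "a \<in> C" and b: "b \<in> C" for a b
  proof -
    have "inner (gl a) (b - a) \<le> l b - l a - \<mu> / 2 * (norm (a - b))\<^sup>2" by (rule one[OF a b])
    moreover have "inner (gl b) (a - b) \<le> l a - l b - \<mu> / 2 * (norm (b - a))\<^sup>2" by (rule one[OF b a])
    moreover have "norm (b - a) = norm (a - b)" by (rule norm_minus_commute)
    ultimately show ?thesis by (simp add: inner_diff_left inner_diff_right algebra_simps)
  qed
  thus ?thesis using mu by blast
qed

lemma taylor_holder:
  fixes Xi :: "'a::euclidean_space \<Rightarrow> 'a"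
  assumes der: "\<forall>x\<in>cball wb \<rho>. linear (DXi x) \<and> (Xi has_derivative DXi x) (at x)"
   and hol: "\<forall>x\<in>cball wb \<rho>. onorm (\<lambda>u. DXi x u - DXi wb u) \<le> L * norm (x - wb) powr \<alpha>"
   and "0 < \<alpha>" "0 \<le> L" "0 \<le> r" "r \<le> \<rho>" "a \<in> cball wb r" "b \<in> cball wb r"
  shows "norm (Xi b - Xi a - DXi wb (b - a)) \<le> norm (b - a) * (L * r powr \<alpha>)"
proof -
  have seg: "a + t *\<^sub>R (b - a) \<in> cball wb r" if t: "t \<in> {0..1}" for t
    using convexD_alt[OF convex_cball[of wb r] assms(7,8), of t] t
    by (simp add: algebra_simps)
  have der': "(Xi has_derivative DXi x) (at x within cball wb r)" if x: "x \<in> cball wb r" for x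
  proof -
    have x': "x \<in> cball wb \<rho>" using assms(6) x by auto
    show ?thesis using der x' by (auto intro: has_derivative_at_withinI)
  qed
  have bnd: "onorm (DXi x - DXi wb) \<le> L * r powr \<alpha>" if x: "x \<in> cball wb r" for x
  proof -
    have x': "x \<in> cball wb \<rho>" using assms(6) x by auto
    have "onorm (DXi x - DXi wb) = onorm (\<lambda>u. DXi x u - DXi wb u)" by (simp add: fun_diff_def)
    also have "\<dots> \<le> L * norm (x - wb) powr \<alpha>" using hol x' by blast
    also have "\<dots> \<le> L * r powr \<alpha>"
      using x assms(3,4) by (intro mult_left_mono powr_mono2) (auto simp: dist_norm norm_minus_commute)
    finally show ?thesis .
  qed
  have wbin: "wb \<in> cball wb r" using assms(5) by simp
  show ?thesis
    by (rule differentiable_bound_linearization[where S="cball wb r" and f'=DXi, OF seg der' bnd wbin])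
qed

lemma tangent_in_K:
  fixes Xi :: "'a::euclidean_space \<Rightarrow> 'a" and K D :: "'a set"
  assumes der: "\<forall>x\<in>cball wb \<rho>. linear (DXi x) \<and> (Xi has_derivative DXi x) (at x)"
   and hol: "\<forall>x\<in>cball wb \<rho>. onorm (\<lambda>u. DXi x u - DXi wb u) \<le> L * norm (x - wb) powr \<alpha>"
   and al: "0 < \<alpha>" and L: "0 \<le> L" and rho: "0 < \<rho>"
   and K: "closed K" "convex K" "cone K" "0 \<in> K"
   and D: "convex D" "wb \<in> D" and Xi0: "Xi wb = 0"
   and red: "D \<inter> cball wb \<rho> = {x. Xi x \<in> K} \<inter> cball wb \<rho>"
   and nn: "\<forall>y\<in>normal_cone D wb. inner n y \<le> 0"
  shows "DXi wb n \<in> K"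
proof (rule ccontr)
  assume nK: "DXi wb n \<notin> K"
  have linA: "linear (DXi wb)" using der rho by auto
  obtain \<mu> where mu: "\<forall>k\<in>K. inner \<mu> k \<le> 0" "inner \<mu> (DXi wb n) > 0"
    using cone_sep[OF K nK] by blast
  have "adjoint (DXi wb) \<mu> \<in> normal_cone D wb"
    unfolding nc_mem[OF D(2)]
  proof
    fix u assume u: "u \<in> D"
    define E where "E = norm (u - wb)"
    define a where "a = inner (adjoint (DXi wb) \<mu>) (u - wb)"
    have a_eq: "a = inner (DXi wb (u - wb)) \<mu>"
      unfolding a_def using adjoint_works[OF linA, of "u - wb" \<mu>] by (simp add: inner_commute)
    show "inner (adjoint (DXi wb) \<mu>) (u - wb) \<le> 0"
    proof (rule ccontr)
      assume "\<not> ?thesis"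
      hence apos: "a > 0" unfolding a_def by simp
      have Epos: "E > 0"
      proof (rule ccontr)
        assume "\<not> E > 0" hence "u = wb" unfolding E_def by simp
        thus False using apos unfolding a_def by simp
      qed
      define \<epsilon> where "\<epsilon> = a / (2 * (norm \<mu> * E * L + 1))"
      have "norm \<mu> * E * L \<ge> 0" using Epos L by simp
      hence den: "2 * (norm \<mu> * E * L + 1) > 0" by simp
      have eps: "\<epsilon> > 0" unfolding \<epsilon>_def using apos den by simp
      define r where "r = min (min \<rho> E) (\<epsilon> powr (1 / \<alpha>)) / 2"
      have rpos: "r > 0" unfolding r_def using rho Epos eps by simp
      have rrho: "r \<le> \<rho>" "r < E" unfolding r_def using rho Epos eps by auto
      have "\<epsilon> powr (1 / \<alpha>) > 0" using eps by simp
      hence "r < \<epsilon> powr (1 / \<alpha>)" unfolding r_def using rho Epos eps by linarith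
      hence "r powr \<alpha> < (\<epsilon> powr (1 / \<alpha>)) powr \<alpha>"
        using rpos al by (intro powr_less_mono2) auto
      hence ra: "r powr \<alpha> < \<epsilon>" using al eps by (simp add: powr_powr)
      define s where "s = r / E"
      have s: "0 < s" "s \<le> 1" unfolding s_def using rpos rrho Epos by auto
      define us where "us = wb + s *\<^sub>R (u - wb)"
      have "us = (1 - s) *\<^sub>R wb + s *\<^sub>R u" unfolding us_def by (simp add: algebra_simps)
      hence usD: "us \<in> D" using convexD_alt[OF D(1) D(2) u, of s] s by simp
      have usn: "norm (us - wb) = r" unfolding us_def s_def E_def using Epos E_def s_def rpos
        by (simp add: E_def)
      hence usb: "us \<in> cball wb r" by (simp add: dist_norm norm_minus_commute)
      hence "us \<in> cball wb \<rho>" using rrho by auto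
      hence "Xi us \<in> K" using red usD by blast
      hence k1: "inner \<mu> (Xi us) \<le> 0" using mu by blast
      have tay: "norm (Xi us - Xi wb - DXi wb (us - wb)) \<le> norm (us - wb) * (L * r powr \<alpha>)"
        by (rule taylor_holder[OF der hol al L]) (use rpos rrho usb in auto)
      have lin_s: "DXi wb (us - wb) = s *\<^sub>R DXi wb (u - wb)"
        unfolding us_def using linA by (simp add: linear_scale)
      have "s * a = inner \<mu> (DXi wb (us - wb))"
        unfolding a_eq lin_s by (simp add: inner_commute)
      also have "\<dots> = inner \<mu> (Xi us) - inner \<mu> (Xi us - Xi wb - DXi wb (us - wb))"
        using Xi0 by (simp add: inner_diff_right)
      also have "\<dots> \<le> 0 + norm \<mu> * norm (Xi us - Xi wb - DXi wb (us - wb))"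
        using k1 Cauchy_Schwarz_ineq2[of \<mu> "Xi us - Xi wb - DXi wb (us - wb)"]
        by (smt (verit) norm_cauchy_schwarz)
      also have "\<dots> \<le> norm \<mu> * (r * (L * r powr \<alpha>))"
        using tay usn by (simp add: mult_left_mono)
      finally have "s * a \<le> norm \<mu> * (r * (L * r powr \<alpha>))" .
      hence "(r * a) / E \<le> norm \<mu> * (r * (L * r powr \<alpha>))"
        unfolding s_def by simp
      hence "r * a \<le> E * (norm \<mu> * (r * (L * r powr \<alpha>)))"
        using Epos by (simp add: pos_divide_le_eq mult.commute)
      also have "\<dots> = r * (norm \<mu> * E * L * r powr \<alpha>)" by (simp add: algebra_simps)
      finally have "a \<le> norm \<mu> * E * L * r powr \<alpha>"
        using rpos by (simp add: mult_le_cancel_left_pos)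
      also have "\<dots> \<le> norm \<mu> * E * L * \<epsilon>"
        using ra L Epos by (intro mult_left_mono) auto
      also have "\<dots> \<le> a / 2"
      proof -
        have "norm \<mu> * E * L * \<epsilon> = a * (norm \<mu> * E * L) / (2 * (norm \<mu> * E * L + 1))"
          unfolding \<epsilon>_def by simp
        also have "\<dots> \<le> a * (norm \<mu> * E * L + 1) / (2 * (norm \<mu> * E * L + 1))"
          using apos den by (intro divide_right_mono mult_left_mono) auto
        also have "\<dots> = a / 2" using den by (simp add: field_simps)
        finally show ?thesis .
      qed
      finally show False using apos by simp
    qed
  qed
  hence "inner n (adjoint (DXi wb) \<mu>) \<le> 0" using nn by blast
  moreover have "inner n (adjoint (DXi wb) \<mu>) = inner (DXi wb n) \<mu>"
    by (rule adjoint_works[OF linA])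
  ultimately show False using mu(2) by (simp add: inner_commute)
qed

lemma metric_reg:
  fixes Xi :: "'a::euclidean_space \<Rightarrow> 'a" and S :: "'a set"
  assumes der: "\<forall>x\<in>cball wb \<rho>. linear (DXi x) \<and> (Xi has_derivative DXi x) (at x)"
   and hol: "\<forall>x\<in>cball wb \<rho>. onorm (\<lambda>u. DXi x u - DXi wb u) \<le> L * norm (x - wb) powr \<alpha>"
   and al: "0 < \<alpha>" and L: "0 < L" and rho: "0 < \<rho>"
   and S: "subspace S" and XiS: "\<forall>x. Xi x \<in> S" and rng: "range (DXi wb) = S"
  shows "\<exists>r0>0. \<exists>c>0. \<forall>y k. norm (y - wb) \<le> r0 \<longrightarrow> k \<in> S \<longrightarrow> norm (Xi y - k) \<le> r0 \<longrightarrow>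
           (\<exists>u. Xi u = k \<and> norm (u - y) \<le> c * norm (Xi y - k) \<and> norm (u - wb) \<le> \<rho>)"
proof -
  have linA: "linear (DXi wb)" using der rho by auto
  obtain B where B: "linear B" "\<forall>v\<in>DXi wb ` UNIV. DXi wb (B v) = v"
    using linear_exists_right_inverse_on[OF linA subspace_UNIV] by blast
  have AB: "DXi wb (B v) = v" if "v \<in> S" for v using B(2) rng that by auto
  obtain Bn where Bn: "Bn > 0" "\<And>x. norm (B x) \<le> Bn * norm x"
    using linear_bounded_pos[OF B(1)] by blast
  define \<rho>1 where "\<rho>1 = min \<rho> ((1 / (2 * L * Bn)) powr (1 / \<alpha>))"
  have r1pos: "\<rho>1 > 0" unfolding \<rho>1_def using rho L Bn by simp
  have r1rho: "\<rho>1 \<le> \<rho>" unfolding \<rho>1_def by simp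
  have "\<rho>1 powr \<alpha> \<le> ((1 / (2 * L * Bn)) powr (1 / \<alpha>)) powr \<alpha>"
    using r1pos al by (intro powr_mono2) (auto simp: \<rho>1_def)
  hence "\<rho>1 powr \<alpha> \<le> 1 / (2 * L * Bn)" using al L Bn by (simp add: powr_powr)
  hence key: "Bn * (L * \<rho>1 powr \<alpha>) \<le> 1 / 2"
    using L Bn by (simp add: field_simps)
  define r0 where "r0 = \<rho>1 / (1 + 2 * Bn)"
  have r0pos: "r0 > 0" unfolding r0_def using r1pos Bn by simp
  have "r0 * (1 + 2 * Bn) = \<rho>1" unfolding r0_def using Bn by simp
  hence r0le: "r0 + 2 * Bn * r0 = \<rho>1" by (simp add: algebra_simps)
  have "\<forall>y k. norm (y - wb) \<le> r0 \<longrightarrow> k \<in> S \<longrightarrow> norm (Xi y - k) \<le> r0 \<longrightarrow>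
           (\<exists>u. Xi u = k \<and> norm (u - y) \<le> (2 * Bn) * norm (Xi y - k) \<and> norm (u - wb) \<le> \<rho>)"
  proof (intro allI impI)
    fix y k assume y: "norm (y - wb) \<le> r0" and k: "k \<in> S" and yk: "norm (Xi y - k) \<le> r0"
    define R where "R = 2 * norm (Xi y - k)"
    define X where "X = S \<inter> cball 0 R"
    define G where "G s = s - (Xi (y + B s) - k)" for s
    have inball: "y + B s \<in> cball wb \<rho>1" if s: "s \<in> X" for s
    proof -
      have "norm s \<le> R" using s unfolding X_def by simp
      hence "Bn * norm s \<le> Bn * R" using Bn(1) by (intro mult_left_mono) auto
      hence "norm (B s) \<le> Bn * R" using Bn(2)[of s] by linarith
      also have "\<dots> \<le> 2 * Bn * r0" unfolding R_def using yk Bn by simp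
      finally have "norm (y + B s - wb) \<le> r0 + 2 * Bn * r0"
        using y norm_triangle_ineq[of "y - wb" "B s"] by (simp add: algebra_simps)
      thus ?thesis using r0le by (simp add: dist_norm norm_minus_commute)
    qed
    have lip: "dist (G s1) (G s2) \<le> (1/2) * dist s1 s2" if s1: "s1 \<in> X" and s2: "s2 \<in> X" for s1 s2
    proof -
      have sS: "s1 - s2 \<in> S" using s1 s2 S unfolding X_def by (auto intro: subspace_diff)
      have bd: "(y + B s1) - (y + B s2) = B (s1 - s2)" using B(1) by (simp add: linear_diff)
      have "G s1 - G s2 = - (Xi (y + B s1) - Xi (y + B s2) - DXi wb ((y + B s1) - (y + B s2)))"
        unfolding G_def bd AB[OF sS] by (simp add: algebra_simps)
      hence "norm (G s1 - G s2) = norm (Xi (y + B s1) - Xi (y + B s2) - DXi wb ((y + B s1) - (y + B s2)))"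
        by (metis norm_minus_cancel)
      also have "\<dots> \<le> norm ((y + B s1) - (y + B s2)) * (L * \<rho>1 powr \<alpha>)"
        by (rule taylor_holder[OF der hol al less_imp_le[OF L]])
           (use r1pos r1rho inball s1 s2 in auto)
      also have "\<dots> \<le> (Bn * norm (s1 - s2)) * (L * \<rho>1 powr \<alpha>)"
        unfolding bd using Bn(2) L by (intro mult_right_mono) auto
      also have "\<dots> = (Bn * (L * \<rho>1 powr \<alpha>)) * norm (s1 - s2)" by simp
      also have "\<dots> \<le> (1/2) * norm (s1 - s2)" using key by (intro mult_right_mono) auto
      finally show ?thesis by (simp add: dist_norm)
    qed
    have G0: "G 0 = - (Xi y - k)" unfolding G_def using linear_0[OF B(1)] by simp
    have X0: "0 \<in> X" unfolding X_def R_def using S by (simp add: subspace_0)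
    have GX: "G ` X \<subseteq> X"
    proof
      fix z assume "z \<in> G ` X"
      then obtain s where s: "s \<in> X" and z: "z = G s" by blast
      have "G s \<in> S" unfolding G_def using s k XiS S unfolding X_def by (auto intro: subspace_diff)
      moreover have "norm (G s) \<le> R"
      proof -
        have "norm (G s) \<le> norm (G s - G 0) + norm (G 0)" using norm_triangle_ineq[of "G s - G 0" "G 0"] by simp
        also have "\<dots> \<le> (1/2) * norm s + norm (Xi y - k)"
          using lip[OF s X0] G0 norm_minus_commute[of k "Xi y"] by (simp add: dist_norm)
        also have "\<dots> \<le> R" using s unfolding X_def R_def by auto
        finally show ?thesis .
      qed
      ultimately show "z \<in> X" unfolding z X_def by simp
    qed
    have cX: "complete X" unfolding X_def complete_eq_closed
      using closed_subspace[OF S] by (intro closed_Int) auto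
    obtain s where s: "s \<in> X" "G s = s"
    proof -
      have ne: "X \<noteq> {}" using X0 by blast
      have "\<exists>!x\<in>X. G x = x"
        by (rule Banach_fix[OF cX ne _ _ GX lip]) auto
      thus ?thesis using that by blast
    qed
    define u where "u = y + B s"
    have "Xi u = k" using s(2) unfolding G_def u_def by (simp add: algebra_simps)
    moreover have "norm (u - y) \<le> (2 * Bn) * norm (Xi y - k)"
    proof -
      have "norm (u - y) = norm (B s)" unfolding u_def by simp
      also have "\<dots> \<le> Bn * norm s" by (rule Bn(2))
      also have "\<dots> \<le> Bn * R" using s(1) Bn(1) unfolding X_def by (intro mult_left_mono) auto
      finally show ?thesis unfolding R_def by simp
    qed
    moreover have "norm (u - wb) \<le> \<rho>"
      using inball[OF s(1)] r1rho unfolding u_def by (simp add: dist_norm norm_minus_commute)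
    ultimately show "\<exists>u. Xi u = k \<and> norm (u - y) \<le> (2 * Bn) * norm (Xi y - k) \<and> norm (u - wb) \<le> \<rho>"
      by blast
  qed
  moreover have "2 * Bn > 0" using Bn by simp
  ultimately show ?thesis using r0pos by blast
qed

lemma cone_add:
  assumes "convex K" "cone K" "a \<in> K" "b \<in> K"
  shows "a + b \<in> K"
proof -
  have "(1 - (1/2::real)) *\<^sub>R a + (1/2) *\<^sub>R b \<in> K"
    using convexD_alt[OF assms(1,3,4), of "1/2"] by simp
  hence "2 *\<^sub>R ((1 - (1/2::real)) *\<^sub>R a + (1/2) *\<^sub>R b) \<in> K"
    using assms(2) by (intro mem_cone) auto
  thus ?thesis by (simp add: algebra_simps)
qed

lemma reduc_key:
  fixes D :: "'a::euclidean_space set"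
  assumes cr: "cone_reducible_at \<alpha> D wb" and al: "0 < \<alpha>" and D: "convex D" "wb \<in> D"
  shows "\<exists>\<rho>2>0. \<exists>C>0. \<forall>w\<in>D. norm (w - wb) \<le> \<rho>2 \<longrightarrow> (\<forall>n. norm n = 1 \<longrightarrow>
     (\<forall>y\<in>normal_cone D wb. inner n y \<le> 0) \<longrightarrow> (\<forall>t. 0 < t \<longrightarrow> t \<le> \<rho>2 \<longrightarrow>
       (\<exists>u\<in>D. norm (u - (w + t *\<^sub>R n)) \<le> C * t * (norm (w - wb) + t) powr \<alpha>)))"
proof -
  obtain \<rho> and S K :: "'a set" and Xi :: "'a \<Rightarrow> 'a" and DXi :: "'a \<Rightarrow> 'a \<Rightarrow> 'a" and L0 where rho: "\<rho> > 0" and S: "subspace S" and KS: "K \<subseteq> S"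
    and K: "closed K" "convex K" "cone K" "K \<inter> uminus ` K = {0}"
    and XiS: "\<forall>x. Xi x \<in> S" and Xi0: "Xi wb = 0"
    and der: "\<forall>x\<in>cball wb \<rho>. linear (DXi x) \<and> (Xi has_derivative DXi x) (at x)"
    and rng: "range (DXi wb) = S"
    and hol0: "\<forall>x\<in>cball wb \<rho>. \<forall>y\<in>cball wb \<rho>. onorm (\<lambda>u. DXi x u - DXi y u) \<le> L0 * (norm (x - y)) powr \<alpha>"
    and red: "D \<inter> cball wb \<rho> = {x. Xi x \<in> K} \<inter> cball wb \<rho>"
    using cr unfolding cone_reducible_at_def by (elim exE conjE) (rule that; assumption)
  define L where "L = \<bar>L0\<bar> + 1"
  have L: "L > 0" unfolding L_def by simp
  have hol: "\<forall>x\<in>cball wb \<rho>. onorm (\<lambda>u. DXi x u - DXi wb u) \<le> L * norm (x - wb) powr \<alpha>"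
  proof
    fix x assume x: "x \<in> cball wb \<rho>"
    have "onorm (\<lambda>u. DXi x u - DXi wb u) \<le> L0 * norm (x - wb) powr \<alpha>"
      using hol0 x rho by simp
    also have "\<dots> \<le> L * norm (x - wb) powr \<alpha>" unfolding L_def
      by (intro mult_right_mono) auto
    finally show "onorm (\<lambda>u. DXi x u - DXi wb u) \<le> L * norm (x - wb) powr \<alpha>" .
  qed
  have K0: "0 \<in> K" using K(4) by blast
  have linA: "linear (DXi wb)" using der rho by auto
  obtain r0 c where r0: "r0 > 0" and c: "c > 0" and mr: "\<And>y k. norm (y - wb) \<le> r0 \<Longrightarrow> k \<in> S \<Longrightarrow>
     norm (Xi y - k) \<le> r0 \<Longrightarrow> (\<exists>u. Xi u = k \<and> norm (u - y) \<le> c * norm (Xi y - k) \<and> norm (u - wb) \<le> \<rho>)"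
    using metric_reg[OF der hol al L rho S XiS rng] by blast
  define \<rho>2 where "\<rho>2 = min (min (\<rho>/2) (r0/2)) (min (1/2) (r0/L))"
  have r2a: "\<rho>2 > 0" unfolding \<rho>2_def using rho r0 L by simp
  have r2b: "\<rho>2 \<le> \<rho>/2" "\<rho>2 \<le> r0/2" "\<rho>2 \<le> 1/2" "\<rho>2 \<le> r0/L"
    unfolding \<rho>2_def by linarith+
  have "\<rho>2 * L \<le> r0" using r2b(4) L by (simp add: pos_le_divide_eq)
  hence r2: "\<rho>2 > 0" "2 * \<rho>2 \<le> \<rho>" "2 * \<rho>2 \<le> r0" "2 * \<rho>2 \<le> 1" "\<rho>2 * L \<le> r0"
    using r2a r2b by auto
  have "\<forall>w\<in>D. norm (w - wb) \<le> \<rho>2 \<longrightarrow> (\<forall>n. norm n = 1 \<longrightarrow>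
     (\<forall>y\<in>normal_cone D wb. inner n y \<le> 0) \<longrightarrow> (\<forall>t. 0 < t \<longrightarrow> t \<le> \<rho>2 \<longrightarrow>
       (\<exists>u\<in>D. norm (u - (w + t *\<^sub>R n)) \<le> (c * L) * t * (norm (w - wb) + t) powr \<alpha>)))"
  proof (intro ballI impI allI)
    fix w n t assume w: "w \<in> D" and wn: "norm (w - wb) \<le> \<rho>2" and n: "norm n = 1"
      and nn: "\<forall>y\<in>normal_cone D wb. inner n y \<le> 0" and t: "0 < t" "t \<le> \<rho>2"
    have An: "DXi wb n \<in> K"
      by (rule tangent_in_K[OF der hol al less_imp_le[OF L] rho K(1-3) K0 D Xi0 red nn])
    define y where "y = w + t *\<^sub>R n"
    define r' where "r' = norm (w - wb) + t"
    have r'b: "0 \<le> r'" "r' \<le> 2 * \<rho>2" unfolding r'_def using wn t by auto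
    have wc: "w \<in> cball wb r'" unfolding r'_def using t by (simp add: dist_norm norm_minus_commute)
    have "norm (y - wb) \<le> norm (w - wb) + norm (t *\<^sub>R n)"
      unfolding y_def using norm_triangle_ineq[of "w - wb" "t *\<^sub>R n"] by (simp add: algebra_simps)
    hence ynorm: "norm (y - wb) \<le> r'" unfolding r'_def using t n by simp
    hence yc: "y \<in> cball wb r'" by (simp add: dist_norm norm_minus_commute)
    have wK: "Xi w \<in> K"
    proof -
      have "w \<in> cball wb \<rho>" using wn r2 by (simp add: dist_norm norm_minus_commute)
      thus ?thesis using red w by blast
    qed
    define k where "k = Xi w + t *\<^sub>R DXi wb n"
    have kK: "k \<in> K" unfolding k_def
      using cone_add[OF K(2,3) wK mem_cone[OF K(3) An, of t]] t by simp
    hence kS: "k \<in> S" using KS by blast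
    have tay: "norm (Xi y - Xi w - DXi wb (y - w)) \<le> norm (y - w) * (L * r' powr \<alpha>)"
      by (rule taylor_holder[OF der hol al less_imp_le[OF L] r'b(1) _ wc yc]) (use r'b r2 in linarith)
    have yw: "y - w = t *\<^sub>R n" unfolding y_def by simp
    have err: "norm (Xi y - k) \<le> t * (L * r' powr \<alpha>)"
      using tay unfolding yw k_def using linA t n by (simp add: linear_scale algebra_simps)
    have "r' powr \<alpha> \<le> 1" using r'b r2 al by (intro powr_le1) auto
    hence "t * (L * r' powr \<alpha>) \<le> t * L" using t L by (simp add: mult_left_le)
    also have "\<dots> \<le> r0" using t r2 L by (smt (verit) mult_right_mono)
    finally have err0: "norm (Xi y - k) \<le> r0" using err by linarith
    have yr0: "norm (y - wb) \<le> r0" using ynorm r'b r2 by linarith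
    obtain u where u: "Xi u = k" "norm (u - y) \<le> c * norm (Xi y - k)" "norm (u - wb) \<le> \<rho>"
      using mr[OF yr0 kS err0] by blast
    have "u \<in> cball wb \<rho>" using u(3) by (simp add: dist_norm norm_minus_commute)
    hence "u \<in> {x. Xi x \<in> K} \<inter> cball wb \<rho>" using kK u(1) by simp
    hence "u \<in> D \<inter> cball wb \<rho>" using red by simp
    hence uD: "u \<in> D" by simp
    have "norm (u - y) \<le> c * (t * (L * r' powr \<alpha>))" using u(2) err c by (smt (verit) mult_left_mono)
    hence "norm (u - y) \<le> (c * L) * t * r' powr \<alpha>" by (simp add: algebra_simps)
    thus "\<exists>u\<in>D. norm (u - (w + t *\<^sub>R n)) \<le> (c * L) * t * (norm (w - wb) + t) powr \<alpha>"
      using uD unfolding y_def r'_def by blast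
  qed
  moreover have "c * L > 0" using c L by simp
  ultimately show ?thesis using r2(1) by blast
qed

lemma proj_cone:
  fixes D :: "'a::euclidean_space set"
  assumes wb: "wb \<in> D"
  shows "\<exists>xh\<in>normal_cone D wb. infdist x (normal_cone D wb) = norm (x - xh) \<and>
           inner (x - xh) xh = 0 \<and> (\<forall>y\<in>normal_cone D wb. inner (x - xh) y \<le> 0)"
proof -
  let ?N = "normal_cone D wb"
  have ne: "?N \<noteq> {}" using nc_zero[OF wb] by blast
  obtain xh where xh: "xh \<in> ?N" "infdist x ?N = dist x xh"
    using infdist_attains_inf[OF nc_closed ne] by blast
  have minr: "\<forall>z\<in>?N. dist x xh \<le> dist x z" using xh(2) infdist_le by metis
  have dot: "inner (x - xh) (y - xh) \<le> 0" if y: "y \<in> ?N" for y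
    by (rule any_closest_point_dot[OF nc_convex nc_closed xh(1) y minr])
  have "inner (x - xh) (0 - xh) \<le> 0" using dot[OF nc_zero[OF wb]] .
  moreover have "inner (x - xh) (2 *\<^sub>R xh - xh) \<le> 0" using dot[OF nc_scale[OF xh(1), of 2]] by simp
  ultimately have z: "inner (x - xh) xh = 0" by (simp add: inner_diff_right algebra_simps)
  have "inner (x - xh) y \<le> 0" if y: "y \<in> ?N" for y
    using dot[OF y] z by (simp add: inner_diff_right)
  thus ?thesis using xh z by (auto simp: dist_norm)
qed

lemma infdist_ge_lemma:
  assumes "A \<noteq> {}" "\<And>a. a \<in> A \<Longrightarrow> b \<le> dist x a"
  shows "b \<le> infdist x A"
  unfolding infdist_def using assms by (auto intro!: cINF_greatest)

lemma claim:
  fixes D :: "'a::euclidean_space set"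
  assumes wb: "wb \<in> D"
    and rk: "\<forall>n. norm n = 1 \<longrightarrow> (\<forall>y\<in>normal_cone D wb. inner n y \<le> 0) \<longrightarrow>
              (\<forall>s. 0 < s \<longrightarrow> s \<le> \<rho>2 \<longrightarrow> (\<exists>u\<in>D. norm (u - (wb + s *\<^sub>R n)) \<le> C * s * s powr \<alpha>))"
    and r2: "\<rho>2 > 0" and C: "C > 0" and al: "0 < \<alpha>" and M: "M > 0"
  shows "\<exists>c1>0. \<forall>x w'. x \<in> normal_cone D w' \<longrightarrow> norm x \<le> M \<longrightarrow>
     c1 * infdist x (normal_cone D wb) * infdist x (normal_cone D wb) powr (1/\<alpha>) \<le> inner x (w' - wb)"
proof -
  define c1 where "c1 = min (\<rho>2 / M powr (1/\<alpha>)) (1 / (2 * M * C) powr (1/\<alpha>)) / 2"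
  have c1: "c1 > 0" unfolding c1_def using r2 M C by simp
  have "c1 * infdist x (normal_cone D wb) * infdist x (normal_cone D wb) powr (1/\<alpha>) \<le> inner x (w' - wb)"
    if x: "x \<in> normal_cone D w'" and xM: "norm x \<le> M" for x w'
  proof -
    let ?N = "normal_cone D wb"
    have w'D: "w' \<in> D" using nc_in[OF x] .
    have xu: "inner x (u - w') \<le> 0" if "u \<in> D" for u using x w'D that by (simp add: nc_mem)
    have e0: "inner x (w' - wb) \<ge> 0" using xu[OF wb] by (simp add: inner_diff_right)
    obtain xh where xh: "xh \<in> ?N" "infdist x ?N = norm (x - xh)" "inner (x - xh) xh = 0"
      "\<forall>y\<in>?N. inner (x - xh) y \<le> 0" using proj_cone[OF wb, of x] by blast
    define \<eta> where "\<eta> = norm (x - xh)"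
    show ?thesis
    proof (cases "\<eta> = 0")
      case True thus ?thesis using xh(2) e0 unfolding \<eta>_def by simp
    next
      case False
      hence eta: "\<eta> > 0" unfolding \<eta>_def by simp
      have etaM: "\<eta> \<le> M"
      proof -
        have "infdist x ?N \<le> dist x 0" by (rule infdist_le[OF nc_zero[OF wb]])
        thus ?thesis using xh(2) xM unfolding \<eta>_def by simp
      qed
      define n where "n = (1/\<eta>) *\<^sub>R (x - xh)"
      have n1: "norm n = 1" unfolding n_def \<eta>_def using eta \<eta>_def by simp
      have nn: "\<forall>y\<in>?N. inner n y \<le> 0" unfolding n_def using xh(4) eta
        by (simp add: divide_nonpos_pos)
      have xn: "inner x n = \<eta>"
      proof -
        have "inner x (x - xh) = inner (x - xh) (x - xh) + inner (x - xh) xh"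
          by (simp add: inner_diff_left inner_diff_right inner_commute)
        also have "\<dots> = \<eta> * \<eta>" using xh(3) unfolding \<eta>_def by (simp add: power2_eq_square[symmetric] power2_norm_eq_inner)
        finally show ?thesis unfolding n_def using eta by simp
      qed
      have main: "s * (\<eta> - M * C * s powr \<alpha>) \<le> inner x (w' - wb)" if s: "0 < s" "s \<le> \<rho>2" for s
      proof -
        obtain u where u: "u \<in> D" "norm (u - (wb + s *\<^sub>R n)) \<le> C * s * s powr \<alpha>"
          using rk n1 nn s by blast
        have "inner x (u - wb) \<le> inner x (w' - wb)" using xu[OF u(1)]
          by (simp add: inner_diff_right)
        moreover have "inner x (u - wb) = s * \<eta> + inner x (u - (wb + s *\<^sub>R n))"
          using xn by (simp add: inner_diff_right inner_add_right)
        moreover have "inner x (u - (wb + s *\<^sub>R n)) \<ge> - (M * (C * s * s powr \<alpha>))"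
        proof -
          have "\<bar>inner x (u - (wb + s *\<^sub>R n))\<bar> \<le> norm x * norm (u - (wb + s *\<^sub>R n))"
            by (rule Cauchy_Schwarz_ineq2)
          also have "\<dots> \<le> M * (C * s * s powr \<alpha>)"
            using xM u(2) M by (intro mult_mono) auto
          finally show ?thesis by linarith
        qed
        ultimately show ?thesis by (simp add: algebra_simps xn)
      qed
      define s where "s = min \<rho>2 ((\<eta> / (2 * M * C)) powr (1/\<alpha>))"
      have s: "0 < s" "s \<le> \<rho>2" unfolding s_def using r2 eta M C by auto
      have "s powr \<alpha> \<le> ((\<eta> / (2 * M * C)) powr (1/\<alpha>)) powr \<alpha>"
        using s al by (intro powr_mono2) (auto simp: s_def)
      hence "s powr \<alpha> \<le> \<eta> / (2 * M * C)" using al eta M C by (simp add: powr_powr)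
      hence "M * C * s powr \<alpha> \<le> \<eta> / 2" using M C by (simp add: field_simps)
      hence "\<eta> / 2 \<le> \<eta> - M * C * s powr \<alpha>" by linarith
      hence "s * (\<eta> / 2) \<le> s * (\<eta> - M * C * s powr \<alpha>)" using s by (intro mult_left_mono) auto
      hence "s * (\<eta> / 2) \<le> inner x (w' - wb)" using main[OF s] by linarith
      moreover have "c1 * \<eta> powr (1/\<alpha>) \<le> s / 2"
      proof (cases "\<rho>2 \<le> (\<eta> / (2 * M * C)) powr (1/\<alpha>)")
        case True
        hence seq: "s = \<rho>2" unfolding s_def by simp
        have Mp: "M powr (1/\<alpha>) > 0" using M by simp
        have "\<eta> powr (1/\<alpha>) \<le> M powr (1/\<alpha>)" using eta etaM al by (intro powr_mono2) auto
        hence "c1 * \<eta> powr (1/\<alpha>) \<le> c1 * M powr (1/\<alpha>)" using c1 by (intro mult_left_mono) auto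
        also have "c1 \<le> (\<rho>2 / M powr (1/\<alpha>)) / 2" unfolding c1_def by simp
        hence "c1 * M powr (1/\<alpha>) \<le> ((\<rho>2 / M powr (1/\<alpha>)) / 2) * M powr (1/\<alpha>)"
          using Mp by (intro mult_right_mono) auto
        also have "((\<rho>2 / M powr (1/\<alpha>)) / 2) * M powr (1/\<alpha>) = \<rho>2 / 2" using Mp by simp
        finally show ?thesis using seq by simp
      next
        case False
        hence "s = (\<eta> / (2 * M * C)) powr (1/\<alpha>)" unfolding s_def by simp
        also have "\<dots> = \<eta> powr (1/\<alpha>) / (2 * M * C) powr (1/\<alpha>)"
          using eta M C by (simp add: powr_divide)
        finally have seq: "s = \<eta> powr (1/\<alpha>) * (1 / (2 * M * C) powr (1/\<alpha>))" by simp
        have "c1 \<le> (1 / (2 * M * C) powr (1/\<alpha>)) / 2" unfolding c1_def by simp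
        hence "c1 * \<eta> powr (1/\<alpha>) \<le> ((1 / (2 * M * C) powr (1/\<alpha>)) / 2) * \<eta> powr (1/\<alpha>)"
          by (rule mult_right_mono) simp
        thus ?thesis unfolding seq by simp
      qed
      hence "\<eta> * (c1 * \<eta> powr (1/\<alpha>)) \<le> \<eta> * (s / 2)" using eta by (intro mult_left_mono) auto
      moreover have "\<eta> * (s / 2) = s * (\<eta> / 2)" by simp
      moreover have "c1 * \<eta> * \<eta> powr (1/\<alpha>) = \<eta> * (c1 * \<eta> powr (1/\<alpha>))" by simp
      ultimately have "c1 * \<eta> * \<eta> powr (1/\<alpha>) \<le> inner x (w' - wb)" by linarith
      thus ?thesis using xh(2) unfolding \<eta>_def by simp
    qed
  qed
  thus ?thesis using c1 by blast
qed

lemma nc_holder_part2: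
  fixes D :: "'a::euclidean_space set"
  assumes wb: "wb \<in> D"
   and rk: "\<forall>w\<in>D. norm (w - wb) \<le> \<rho>2 \<longrightarrow> (\<forall>n. norm n = 1 \<longrightarrow>
     (\<forall>y\<in>normal_cone D wb. inner n y \<le> 0) \<longrightarrow> (\<forall>t. 0 < t \<longrightarrow> t \<le> \<rho>2 \<longrightarrow>
       (\<exists>u\<in>D. norm (u - (w + t *\<^sub>R n)) \<le> C * t * (norm (w - wb) + t) powr \<alpha>)))"
   and C: "C > 0" and al: "0 < \<alpha>" and M: "M > 0"
   and w: "norm (w - wb) \<le> \<rho>2" and z: "z \<in> normal_cone D w" and zM: "norm z \<le> M"
  shows "\<exists>a b. z = a + b \<and> a \<in> normal_cone D wb \<and> norm b \<le> (M * C * 2 powr \<alpha>) * norm (w - wb) powr \<alpha>"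
proof -
  let ?N = "normal_cone D wb"
  have wD: "w \<in> D" using nc_in[OF z] .
  obtain zh where zh: "zh \<in> ?N" "infdist z ?N = norm (z - zh)" "inner (z - zh) zh = 0"
      "\<forall>y\<in>?N. inner (z - zh) y \<le> 0" using proj_cone[OF wb, of z] by blast
  define \<eta> where "\<eta> = norm (z - zh)"
  have "norm (z - zh) \<le> (M * C * 2 powr \<alpha>) * norm (w - wb) powr \<alpha>"
  proof (cases "\<eta> = 0")
    case True thus ?thesis unfolding \<eta>_def using M C by simp
  next
    case False
    hence eta: "\<eta> > 0" unfolding \<eta>_def by simp
    define t where "t = norm (w - wb)"
    have tpos: "t > 0"
    proof (rule ccontr)
      assume "\<not> t > 0" hence "w = wb" unfolding t_def by simp
      hence "z \<in> ?N" using z by simp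
      hence "infdist z ?N = 0" by simp
      thus False using zh(2) eta unfolding \<eta>_def by simp
    qed
    define n where "n = (1/\<eta>) *\<^sub>R (z - zh)"
    have n1: "norm n = 1" unfolding n_def \<eta>_def using eta \<eta>_def by simp
    have nn: "\<forall>y\<in>?N. inner n y \<le> 0" unfolding n_def using zh(4) eta
      by (simp add: divide_nonpos_pos)
    have zn: "inner z n = \<eta>"
    proof -
      have "inner z (z - zh) = inner (z - zh) (z - zh) + inner (z - zh) zh"
        by (simp add: inner_diff_left inner_diff_right inner_commute)
      also have "\<dots> = \<eta> * \<eta>" using zh(3) unfolding \<eta>_def
        by (simp add: power2_eq_square[symmetric] power2_norm_eq_inner)
      finally show ?thesis unfolding n_def using eta by simp
    qed
    have tle: "t \<le> \<rho>2" using w unfolding t_def .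
    have ex: "\<exists>u\<in>D. norm (u - (w + t *\<^sub>R n)) \<le> C * t * (norm (w - wb) + t) powr \<alpha>"
      using nn by (intro rk[rule_format, OF wD w n1 _ tpos tle]) auto
    obtain u where u: "u \<in> D" "norm (u - (w + t *\<^sub>R n)) \<le> C * t * (t + t) powr \<alpha>"
      using ex unfolding t_def[symmetric] by blast
    have zu: "inner z (u - w) \<le> 0" using z wD u(1) by (simp add: nc_mem)
    have "t * \<eta> = inner z (u - w) + inner z ((w + t *\<^sub>R n) - u)"
      using zn by (simp add: inner_diff_right inner_add_right)
    also have "\<dots> \<le> 0 + norm z * norm ((w + t *\<^sub>R n) - u)"
      using zu Cauchy_Schwarz_ineq2[of z "(w + t *\<^sub>R n) - u"] by linarith
    also have "\<dots> \<le> M * (C * t * (t + t) powr \<alpha>)"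
      using zM u(2) M by (simp add: norm_minus_commute mult_mono)
    also have "(t + t) powr \<alpha> = 2 powr \<alpha> * t powr \<alpha>"
      using tpos by (simp add: powr_mult[symmetric])
    finally have "t * \<eta> \<le> t * ((M * C * 2 powr \<alpha>) * t powr \<alpha>)" by (simp add: algebra_simps)
    hence "\<eta> \<le> (M * C * 2 powr \<alpha>) * t powr \<alpha>" using tpos by (simp add: mult_le_cancel_left_pos)
    thus ?thesis unfolding \<eta>_def t_def .
  qed
  moreover have "z = zh + (z - zh)" by simp
  ultimately show ?thesis using zh(1) by blast
qed

lemma eb_algebra:
  fixes \<alpha> c1 \<mu> cc G d r \<delta> :: real
  assumes al: "0 < \<alpha>" "\<alpha> \<le> 1" and pos: "c1 > 0" "\<mu> > 0" "cc > 0"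
    and G: "0 \<le> G" "G \<le> 1" and nn: "0 \<le> r" "0 \<le> \<delta>"
    and A1: "c1 * \<delta> * \<delta> powr (1/\<alpha>) + \<mu> * r\<^sup>2 \<le> G * d" and A2: "d \<le> cc * (r + \<delta>)"
  shows "d \<le> (4 * cc\<^sup>2 / \<mu> + 2 * cc * (2 * cc / c1) powr \<alpha>) * G powr \<alpha>"
proof -
  have t1: "0 \<le> c1 * \<delta> * \<delta> powr (1/\<alpha>)" using pos nn by simp
  have GG: "G \<le> G powr \<alpha>"
  proof -
    have "G powr 1 \<le> G powr \<alpha>" using G al by (intro powr_mono') auto
    thus ?thesis using G by (simp add: powr_one)
  qed
  have Ga: "0 \<le> G powr \<alpha>" by simp
  have b1: "0 \<le> 4 * cc\<^sup>2 / \<mu> * G powr \<alpha>" using pos by simp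
  have b2: "0 \<le> 2 * cc * (2 * cc / c1) powr \<alpha> * G powr \<alpha>" using pos by simp
  show ?thesis
  proof (cases "\<delta> \<le> r")
    case True
    have "cc * (r + \<delta>) \<le> cc * (2 * r)" using True pos by (intro mult_left_mono) auto
    hence d2: "d \<le> 2 * cc * r" using A2 by simp
    show ?thesis
    proof (cases "r = 0")
      case True
      hence "d \<le> 0" using d2 by simp
      thus ?thesis unfolding distrib_right using b1 b2 by linarith
    next
      case False
      hence rp: "r > 0" using nn by simp
      have "\<mu> * r\<^sup>2 \<le> G * d" using A1 t1 by linarith
      also have "\<dots> \<le> G * (2 * cc * r)" using G d2 by (intro mult_left_mono) auto
      finally have "r * (\<mu> * r) \<le> r * (2 * cc * G)" by (simp add: power2_eq_square algebra_simps)
      hence "\<mu> * r \<le> 2 * cc * G" using rp by (simp add: mult_le_cancel_left_pos)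
      hence "r \<le> 2 * cc * G / \<mu>" using pos by (simp add: field_simps)
      hence "2 * cc * r \<le> 2 * cc * (2 * cc * G / \<mu>)" using pos by (intro mult_left_mono) auto
      hence "d \<le> 2 * cc * (2 * cc * G / \<mu>)" using d2 by linarith
      also have "\<dots> = 4 * cc\<^sup>2 / \<mu> * G" by (simp add: power2_eq_square)
      also have "\<dots> \<le> 4 * cc\<^sup>2 / \<mu> * G powr \<alpha>" using GG pos by (intro mult_left_mono) auto
      finally have "d \<le> 4 * cc\<^sup>2 / \<mu> * G powr \<alpha>" .
      thus ?thesis unfolding distrib_right using b2 by linarith
    qed
  next
    case False
    hence dp: "\<delta> > 0" "r < \<delta>" using nn by auto
    have "cc * (r + \<delta>) \<le> cc * (2 * \<delta>)" using dp pos by (intro mult_left_mono) auto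
    hence d2: "d \<le> 2 * cc * \<delta>" using A2 by simp
    have "c1 * \<delta> * \<delta> powr (1/\<alpha>) \<le> G * d" proof -
      have "0 \<le> \<mu> * r\<^sup>2" using pos by simp
      thus ?thesis using A1 by linarith
    qed
    also have "\<dots> \<le> G * (2 * cc * \<delta>)" using G d2 by (intro mult_left_mono) auto
    finally have "\<delta> * (c1 * \<delta> powr (1/\<alpha>)) \<le> \<delta> * (2 * cc * G)" by (simp add: algebra_simps)
    hence "c1 * \<delta> powr (1/\<alpha>) \<le> 2 * cc * G" using dp by (simp add: mult_le_cancel_left_pos)
    hence le1: "\<delta> powr (1/\<alpha>) \<le> 2 * cc / c1 * G" using pos by (simp add: field_simps)
    have "\<delta> = (\<delta> powr (1/\<alpha>)) powr \<alpha>" using dp al by (simp add: powr_powr)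
    also have "\<dots> \<le> (2 * cc / c1 * G) powr \<alpha>" using le1 al by (intro powr_mono2) auto
    also have "\<dots> = (2 * cc / c1) powr \<alpha> * G powr \<alpha>"
      using powr_mult[of "2 * cc / c1" G \<alpha>] pos G by simp
    finally have "\<delta> \<le> (2 * cc / c1) powr \<alpha> * G powr \<alpha>" .
    hence "2 * cc * \<delta> \<le> 2 * cc * ((2 * cc / c1) powr \<alpha> * G powr \<alpha>)" using pos by (intro mult_left_mono) auto
    hence "d \<le> 2 * cc * ((2 * cc / c1) powr \<alpha> * G powr \<alpha>)" using d2 by linarith
    hence "d \<le> 2 * cc * (2 * cc / c1) powr \<alpha> * G powr \<alpha>" by (simp add: mult.assoc)
    thus ?thesis unfolding distrib_right using b1 by linarith
  qed
qed

lemma kl_algebra: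
  fixes H G d K2 \<alpha> :: real
  assumes "0 < H" "H < 1" "H \<le> G * d" "G \<le> 1 \<Longrightarrow> d \<le> K2 * G powr \<alpha>" "0 \<le> G" "0 < \<alpha>" "K2 > 0"
  shows "H powr (1/(\<alpha>+1)) \<le> max 1 (K2 powr (1/(\<alpha>+1))) * G"
proof (cases "G \<le> 1")
  case False
  have "H powr (1/(\<alpha>+1)) \<le> 1" using assms by (intro powr_le1) auto
  also have "1 \<le> max 1 (K2 powr (1/(\<alpha>+1))) * G"
  proof -
    have "1 * 1 \<le> max 1 (K2 powr (1/(\<alpha>+1))) * G" using False by (intro mult_mono) auto
    thus ?thesis by simp
  qed
  finally show ?thesis .
next
  case True
  have "G * d \<le> G * (K2 * G powr \<alpha>)" using assms True by (intro mult_left_mono) auto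
  hence "H \<le> G * (K2 * G powr \<alpha>)" using assms(3) by linarith
  also have "\<dots> = K2 * (G powr 1 * G powr \<alpha>)" using assms by (simp add: powr_one)
  also have "\<dots> = K2 * G powr (1 + \<alpha>)" by (simp add: powr_add)
  finally have H1: "H \<le> K2 * G powr (1 + \<alpha>)" .
  have "H powr (1/(\<alpha>+1)) \<le> (K2 * G powr (1 + \<alpha>)) powr (1/(\<alpha>+1))"
    using H1 assms by (intro powr_mono2) auto
  also have "\<dots> = K2 powr (1/(\<alpha>+1)) * (G powr (1 + \<alpha>)) powr (1/(\<alpha>+1))"
    using assms by (simp add: powr_mult)
  also have "(G powr (1 + \<alpha>)) powr (1/(\<alpha>+1)) = G powr 1"
    using assms by (simp add: powr_powr add.commute)
  also have "G powr 1 = G" using assms by (simp add: powr_one)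
  also have "K2 powr (1/(\<alpha>+1)) * G \<le> max 1 (K2 powr (1/(\<alpha>+1))) * G"
    using assms by (intro mult_right_mono) auto
  finally show ?thesis .
qed

theorem theorem4p3:
  fixes \<alpha> :: real
    and D :: "'a::euclidean_space set"
    and T :: "'a \<Rightarrow> 'b::euclidean_space"
    and l :: "'b \<Rightarrow> real"
    and gl :: "'b \<Rightarrow> 'b"
    and v :: 'a
    and h :: "'a \<Rightarrow> ereal"
    and xbar :: 'a
  assumes "0 < \<alpha>" and "\<alpha> \<le> 1"
    and "D \<noteq> {}" and "closed D" and "convex D" and "cone_reducible \<alpha> D"
    and "linear T"
    and "\<And>C. compact C \<Longrightarrow> convex C \<Longrightarrow> strongly_convex_on C l"
    and "\<And>y. (l has_derivative (\<lambda>u. inner (gl y) u)) (at y)"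
    and "locally_lipschitz gl"
    and "\<And>x. h x = ereal (l (T x) + inner v x) + support_fun D x"
    and "xbar \<in> argmin_set h"
  shows "xbar \<in> normal_cone D (- adjoint T (gl (T xbar)) - v)
    \<and> (\<exists>\<rho>>0. \<exists>\<delta>>0. \<exists>\<kappa>>0. \<forall>w\<in>cball (- adjoint T (gl (T xbar)) - v) \<rho>.
         normal_cone D w \<inter> cball xbar \<delta> \<subseteq>
           {a + b | a b. a \<in> normal_cone D (- adjoint T (gl (T xbar)) - v) \<and>
              norm b \<le> \<kappa> * (norm (w - (- adjoint T (gl (T xbar)) - v))) powr \<alpha>})
    \<and> (bdd_lin_regular (T -` {T xbar}) (normal_cone D (- adjoint T (gl (T xbar)) - v)) xbar
         \<longrightarrow> KL_exponent h xbar (1 / (\<alpha> + 1)))"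
proof -
  note al = assms(1,2) and Dc = assms(3,4,5) and linT = assms(7)
  define yb where "yb = T xbar"
  define wb where "wb = - adjoint T (gl (T xbar)) - v"
  define f where "f x = l (T x) + inner v x" for x
  define gf where "gf x = adjoint T (gl (T x)) + v" for x
  have hf: "\<And>y. h y = ereal (f y) + support_fun D y" using assms(11) unfolding f_def by simp
  have df: "(f has_derivative (\<lambda>u. inner (gf x) u)) (at x)" for x
  proof -
    have dT: "(T has_derivative T) (at x)" using linT by (rule linear_imp_has_derivative)
    have "((\<lambda>x. l (T x)) has_derivative (\<lambda>u. inner (gl (T x)) (T u))) (at x)"
      using has_derivative_compose[OF dT assms(9)[of "T x"]] by simp
    hence "(f has_derivative (\<lambda>u. inner (gl (T x)) (T u) + inner v u)) (at x)"
      unfolding f_def by (intro derivative_intros)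
    moreover have "(\<lambda>u. inner (gl (T x)) (T u) + inner v u) = (\<lambda>u. inner (gf x) u)"
    proof
      fix u
      have "inner u (adjoint T (gl (T x))) = inner (T u) (gl (T x))" by (rule adjoint_works[OF linT])
      thus "inner (gl (T x)) (T u) + inner v u = inner (gf x) u"
        unfolding gf_def by (simp add: inner_add_right inner_commute)
    qed
    ultimately show ?thesis by simp
  qed
  have sfne: "support_fun D x \<noteq> -\<infinity>" for x using sf_notinf[OF Dc(1)] .
  have h0: "h 0 = ereal (f 0)" using hf[of 0] sf_zero[OF Dc(1)] by simp
  have amin: "\<And>y. h xbar \<le> h y" using assms(12) unfolding argmin_set_def by blast
  have "h xbar \<noteq> \<infinity>" using amin[of 0] h0 by auto
  moreover have "h xbar \<noteq> -\<infinity>" using hf[of xbar] sfne[of xbar] by auto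
  ultimately obtain hb where hb: "h xbar = ereal hb" by (cases "h xbar") auto
  have sub0: "0 \<in> subdiff h xbar" unfolding subdiff_def using hb amin by simp
  have p1: "0 - gf xbar \<in> D \<and> xbar \<in> normal_cone D (0 - gf xbar)"
    by (rule subdiff_sum[OF Dc df hf sub0])
  have wbeq: "0 - gf xbar = wb" unfolding gf_def wb_def by simp
  have wbD: "wb \<in> D" and xbN: "xbar \<in> normal_cone D wb" using p1 wbeq by auto
  have cra: "cone_reducible_at \<alpha> D wb" using assms(6) wbD unfolding cone_reducible_def by blast
  obtain \<rho>2 C where r2: "\<rho>2 > 0" and C: "C > 0" and rk: "\<forall>w\<in>D. norm (w - wb) \<le> \<rho>2 \<longrightarrow> (\<forall>n. norm n = 1 \<longrightarrow>
     (\<forall>y\<in>normal_cone D wb. inner n y \<le> 0) \<longrightarrow> (\<forall>t. 0 < t \<longrightarrow> t \<le> \<rho>2 \<longrightarrow>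
       (\<exists>u\<in>D. norm (u - (w + t *\<^sub>R n)) \<le> C * t * (norm (w - wb) + t) powr \<alpha>)))"
    using reduc_key[OF cra al(1) Dc(3) wbD] by blast
  define M where "M = norm xbar + 1"
  have M: "M > 0" unfolding M_def by (simp add: add_nonneg_pos)
  have part2: "\<exists>\<rho>>0. \<exists>\<delta>>0. \<exists>\<kappa>>0. \<forall>w\<in>cball wb \<rho>.
         normal_cone D w \<inter> cball xbar \<delta> \<subseteq>
           {a + b | a b. a \<in> normal_cone D wb \<and> norm b \<le> \<kappa> * (norm (w - wb)) powr \<alpha>}"
  proof (intro exI conjI ballI subsetI)
    show "\<rho>2 > 0" "(1::real) > 0" "M * C * 2 powr \<alpha> > 0" using r2 M C by auto
  next
    fix w z assume w: "w \<in> cball wb \<rho>2" and z: "z \<in> normal_cone D w \<inter> cball xbar 1"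
    have wn: "norm (w - wb) \<le> \<rho>2" using w by (simp add: dist_norm norm_minus_commute)
    have zM: "norm z \<le> M"
    proof -
      have "norm z \<le> norm xbar + norm (z - xbar)" using norm_triangle_ineq[of xbar "z - xbar"] by simp
      also have "norm (z - xbar) \<le> 1" using z by (simp add: dist_norm norm_minus_commute)
      finally show ?thesis unfolding M_def by simp
    qed
    obtain a b where "z = a + b" "a \<in> normal_cone D wb" "norm b \<le> (M * C * 2 powr \<alpha>) * norm (w - wb) powr \<alpha>"
      using nc_holder_part2[OF wbD rk C al(1) M wn _ zM] z by blast
    thus "z \<in> {a + b | a b. a \<in> normal_cone D wb \<and> norm b \<le> (M * C * 2 powr \<alpha>) * (norm (w - wb)) powr \<alpha>}"
      by blast
  qed
  have part3: "bdd_lin_regular (T -` {T xbar}) (normal_cone D wb) xbar \<longrightarrow> KL_exponent h xbar (1 / (\<alpha> + 1))"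
  proof
    assume reg: "bdd_lin_regular (T -` {T xbar}) (normal_cone D wb) xbar"
    let ?N = "normal_cone D wb"
    let ?Z = "T -` {yb} \<inter> normal_cone D wb"
    have rk0: "\<forall>n. norm n = 1 \<longrightarrow> (\<forall>y\<in>?N. inner n y \<le> 0) \<longrightarrow>
        (\<forall>s. 0 < s \<longrightarrow> s \<le> \<rho>2 \<longrightarrow> (\<exists>u\<in>D. norm (u - (wb + s *\<^sub>R n)) \<le> C * s * s powr \<alpha>))"
    proof (intro allI impI)
      fix n s assume n: "norm n = 1" "\<forall>y\<in>?N. inner n y \<le> 0" and s: "0 < s" "s \<le> \<rho>2"
      have "\<exists>u\<in>D. norm (u - (wb + s *\<^sub>R n)) \<le> C * s * (norm (wb - wb) + s) powr \<alpha>"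
        using n(2) r2 by (intro rk[rule_format, OF wbD _ n(1) _ s]) auto
      thus "\<exists>u\<in>D. norm (u - (wb + s *\<^sub>R n)) \<le> C * s * s powr \<alpha>" by simp
    qed
    obtain c1 where c1: "c1 > 0" and cl: "\<And>x w'. x \<in> normal_cone D w' \<Longrightarrow> norm x \<le> M \<Longrightarrow>
        c1 * infdist x ?N * infdist x ?N powr (1/\<alpha>) \<le> inner x (w' - wb)"
      using claim[OF wbD rk0 r2 C al(1) M] by blast
    define C0 where "C0 = T ` cball xbar 1"
    have blT: "bounded_linear T" using linT by (simp add: linear_conv_bounded_linear)
    have C0c: "compact C0" unfolding C0_def
      by (rule compact_continuous_image[OF linear_continuous_on[OF blT] compact_cball])
    have C0v: "convex C0" unfolding C0_def by (rule convex_linear_image[OF linT convex_cball])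
    obtain \<mu> where mu: "\<mu> > 0" and smono: "\<And>a b. a \<in> C0 \<Longrightarrow> b \<in> C0 \<Longrightarrow> \<mu> * (norm (a - b))\<^sup>2 \<le> inner (gl a - gl b) (a - b)"
      using strong_mono[OF assms(8)[OF C0c C0v] assms(9)] by blast
    have "bounded (cball xbar (1::real))" by simp
    moreover have "xbar \<in> interior (cball xbar 1)" by simp
    ultimately obtain creg where creg: "creg > 0" and regi: "\<And>x. x \<in> cball xbar 1 \<Longrightarrow>
        infdist x ?Z \<le> creg * (infdist x (T -` {yb}) + infdist x ?N)"
      using reg unfolding bdd_lin_regular_def yb_def by blast
    obtain BT where BT: "linear BT" "\<forall>v\<in>T ` UNIV. T (BT v) = v"
      using linear_exists_right_inverse_on[OF linT subspace_UNIV] by blast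
    obtain cT where cT: "cT > 0" "\<And>x. norm (BT x) \<le> cT * norm x"
      using linear_bounded_pos[OF BT(1)] by blast
    have hof: "infdist x (T -` {yb}) \<le> cT * norm (T x - yb)" for x
    proof -
      have rg: "T x - yb = T (x - xbar)" unfolding yb_def using linT by (simp add: linear_diff)
      hence TB: "T (BT (T x - yb)) = T x - yb" using BT(2) by auto
      have "T (x - BT (T x - yb)) = yb" using TB linT by (simp add: linear_diff)
      hence "infdist x (T -` {yb}) \<le> dist x (x - BT (T x - yb))" by (intro infdist_le) simp
      also have "\<dots> = norm (BT (T x - yb))" by (simp add: dist_norm)
      also have "\<dots> \<le> cT * norm (T x - yb)" by (rule cT(2))
      finally show ?thesis .
    qed
    have Zc: "closed ?Z"
    proof (rule closed_Int)
      show "closed (T -` {yb})"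
        by (rule continuous_closed_vimage[OF closed_singleton]) (simp add: linear_continuous_at[OF blT])
    qed (rule nc_closed)
    have xbZ: "xbar \<in> ?Z" using xbN unfolding yb_def by simp
    have hZ: "h z = ereal (l yb - inner yb (gl yb))" if z: "z \<in> ?Z" for z
    proof -
      have Tz: "T z = yb" and zN: "z \<in> ?N" using z by auto
      have "h z = ereal (f z) + ereal (inner z wb)" using hf[of z] sf_nc[OF zN] by simp
      moreover have "inner z (adjoint T (gl yb)) = inner yb (gl yb)"
        using adjoint_works[OF linT, of z "gl yb"] Tz by simp
      ultimately show ?thesis unfolding f_def wb_def yb_def[symmetric] Tz
        by (simp add: inner_diff_right inner_minus_right inner_commute)
    qed
    have hbeq: "hb = l yb - inner yb (gl yb)" using hZ[OF xbZ] hb by simp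
    define cc where "cc = creg * (cT + 1)"
    define K2 where "K2 = 4 * cc\<^sup>2 / \<mu> + 2 * cc * (2 * cc / c1) powr \<alpha>"
    define K3 where "K3 = max 1 (K2 powr (1/(\<alpha>+1)))"
    have ccp: "cc > 0" unfolding cc_def using creg cT by simp
    have K2p: "K2 > 0" unfolding K2_def using ccp mu c1 by (intro add_pos_nonneg) auto
    have K3p: "K3 \<ge> 1" unfolding K3_def by simp
    have key: "(hx - hb) powr (1/(\<alpha>+1)) \<le> K3 * norm g"
      if x: "x \<in> ball xbar 1" and g: "g \<in> subdiff h x" and hx: "h x = ereal hx"
        and H: "0 < hx - hb" "hx - hb < 1" for x g hx
    proof -
      define w' where "w' = g - gf x"
      have w'D: "w' \<in> D" and xN: "x \<in> normal_cone D w'"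
        using subdiff_sum[OF Dc df hf g] unfolding w'_def by auto
      obtain z where z: "z \<in> ?Z" "infdist x ?Z = dist x z"
        using infdist_attains_inf[OF Zc, of x] xbZ by blast
      have Tz: "T z = yb" and zN: "z \<in> ?N" using z(1) by auto
      define d where "d = dist x z"
      define r where "r = norm (T x - yb)"
      define \<delta> where "\<delta> = infdist x ?N"
      define G where "G = norm g"
      have xc: "x \<in> cball xbar 1" using x by simp
      have xM: "norm x \<le> M"
      proof -
        have "norm x \<le> norm xbar + norm (x - xbar)" using norm_triangle_ineq[of xbar "x - xbar"] by simp
        also have "norm (x - xbar) \<le> 1" using xc by (simp add: dist_norm norm_minus_commute)
        finally show ?thesis unfolding M_def by simp
      qed
      have subg: "h z \<ge> h x + ereal (inner g (z - x))"
        using g by (auto simp: subdiff_def split: if_splits)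
      hence "hb \<ge> hx + inner g (z - x)" using hZ[OF z(1)] hbeq hx by simp
      hence Hle: "hx - hb \<le> inner g (x - z)" by (simp add: inner_diff_right)
      have cs: "inner g (x - z) \<le> G * d" unfolding G_def d_def dist_norm
        using Cauchy_Schwarz_ineq2[of g "x - z"] by linarith
      have e1: "c1 * \<delta> * \<delta> powr (1/\<alpha>) \<le> inner x (w' - wb)" unfolding \<delta>_def by (rule cl[OF xN xM])
      have e2: "inner z (w' - wb) \<le> 0" using zN w'D wbD by (simp add: nc_mem)
      have e3: "w' - wb = g - adjoint T (gl (T x) - gl yb)"
        unfolding w'_def gf_def wb_def yb_def using linear_diff[OF adjoint_linear[OF linT]]
        by (simp add: algebra_simps)
      have e4: "inner (x - z) (adjoint T (gl (T x) - gl yb)) = inner (T x - yb) (gl (T x) - gl yb)"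
        using adjoint_works[OF linT, of "x - z" "gl (T x) - gl yb"] Tz linT by (simp add: linear_diff)
      have TxC: "T x \<in> C0" unfolding C0_def using xc by blast
      have ybC: "yb \<in> C0" unfolding C0_def yb_def by simp
      have e5: "\<mu> * r\<^sup>2 \<le> inner (T x - yb) (gl (T x) - gl yb)"
        using smono[OF TxC ybC] unfolding r_def by (simp add: inner_commute)
      have "inner x (w' - wb) - inner z (w' - wb) = inner (x - z) g - inner (x - z) (adjoint T (gl (T x) - gl yb))"
        unfolding e3 by (simp add: inner_diff_left inner_diff_right)
      hence A1: "c1 * \<delta> * \<delta> powr (1/\<alpha>) + \<mu> * r\<^sup>2 \<le> G * d"
        using e1 e2 e4 e5 cs by (simp add: inner_commute)
      have "d \<le> creg * (infdist x (T -` {yb}) + \<delta>)" using regi[OF xc] z(2) unfolding d_def \<delta>_def by simp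
      also have "\<dots> \<le> creg * (cT * r + \<delta>)" using hof[of x] creg unfolding r_def by (intro mult_left_mono) auto
      also have "\<dots> \<le> cc * (r + \<delta>)"
      proof -
        have "0 \<le> r" "0 \<le> \<delta>" unfolding r_def \<delta>_def by (auto simp: infdist_nonneg)
        hence "cT * r + \<delta> \<le> (cT + 1) * (r + \<delta>)" using cT by (simp add: algebra_simps)
        thus ?thesis unfolding cc_def using creg by (simp add: mult.assoc mult_left_mono)
      qed
      finally have A2: "d \<le> cc * (r + \<delta>)" .
      have eb: "d \<le> K2 * G powr \<alpha>" if G1: "G \<le> 1"
        unfolding K2_def
        by (rule eb_algebra[OF al c1 mu ccp _ G1 _ _ A1 A2]) (auto simp: G_def r_def \<delta>_def infdist_nonneg)
      have "(hx - hb) powr (1/(\<alpha>+1)) \<le> max 1 (K2 powr (1/(\<alpha>+1))) * G"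
        by (rule kl_algebra[OF H _ eb _ al(1) K2p]) (use Hle cs in \<open>auto simp: G_def\<close>)
      thus ?thesis unfolding K3_def G_def .
    qed
    show "KL_exponent h xbar (1 / (\<alpha> + 1))"
      unfolding KL_exponent_def
    proof (intro conjI exI[of _ "1::ereal"] exI[of _ "ball xbar 1"] exI[of _ "K3 / (1 - 1/(\<alpha>+1))"] ballI impI)
      show "subdiff h xbar \<noteq> {}" using sub0 by blast
      show "(0::ereal) < 1" by simp
      show "open (ball xbar 1)" by simp
      show "xbar \<in> ball xbar 1" by simp
      have th: "0 < 1 - 1/(\<alpha>+1)" using al by (simp add: field_simps)
      show a0p: "0 < K3 / (1 - 1/(\<alpha>+1))" using th K3p by simp
      fix x assume x: "x \<in> ball xbar 1" and hx: "h xbar < h x \<and> h x < h xbar + 1"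
      have "h x \<noteq> \<infinity>" using hx hb by auto
      moreover have "h x \<noteq> -\<infinity>" using hx by auto
      ultimately obtain hxv where hxv: "h x = ereal hxv" by (cases "h x") auto
      have H: "0 < hxv - hb" "hxv - hb < 1" using hx hxv hb by auto
      show "subdiff h x = {} \<or> 1 \<le> K3 / (1 - 1/(\<alpha>+1)) * (1 - 1/(\<alpha>+1)) *
              real_of_ereal (h x - h xbar) powr - (1/(\<alpha>+1)) * infdist 0 (subdiff h x)"
      proof (cases "subdiff h x = {}")
        case True thus ?thesis by simp
      next
        case False
        define H where "H = hxv - hb"
        have Hp: "H > 0" unfolding H_def using H by simp
        have rh: "real_of_ereal (h x - h xbar) = H" unfolding H_def using hxv hb by simp
        have idf: "H powr (1/(\<alpha>+1)) / K3 \<le> infdist 0 (subdiff h x)"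
        proof (rule infdist_ge_lemma[OF False])
          fix g assume "g \<in> subdiff h x"
          hence "H powr (1/(\<alpha>+1)) \<le> K3 * norm g" unfolding H_def by (rule key[OF x _ hxv H])
          thus "H powr (1/(\<alpha>+1)) / K3 \<le> dist 0 g" using K3p by (simp add: field_simps)
        qed
        have qq: "\<And>q::real. q \<noteq> 0 \<Longrightarrow> K3 / q * q = K3" by simp
        have "K3 / (1 - 1/(\<alpha>+1)) * (1 - 1/(\<alpha>+1)) = K3" by (rule qq) (use th in linarith)
        moreover have "K3 * H powr - (1/(\<alpha>+1)) * (H powr (1/(\<alpha>+1)) / K3) = 1"
          using Hp K3p by (simp add: powr_minus field_simps)
        moreover have "K3 * H powr - (1/(\<alpha>+1)) * (H powr (1/(\<alpha>+1)) / K3)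
                      \<le> K3 * H powr - (1/(\<alpha>+1)) * infdist 0 (subdiff h x)"
          using idf K3p by (intro mult_left_mono) auto
        ultimately show ?thesis unfolding rh by simp
      qed
    qed
  qed
  show ?thesis using xbN part2 part3 unfolding wb_def by blast
qed

end
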